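(* In the setting of the context (an agent running fixed-parameter $\mathrm{EXPN}$ with $b$ neighbors whose distributions satisfy $q^i_j(t)\ge\varepsilon_i/K$ for all $i,j,t$), for every time $t$, $$\sum_{j=1}^K\frac{p_j(t)}{p'_j(t)}\le \frac{1}{1-\left(1-\frac1K\right)\Theta}+1=\beta,\qquad\text{where }\Theta=\prod_{i=1}^b\left(1-\frac{\varepsilon_i}{K}\right).$$
   Context: There are $K$ arms. An agent has $b$ neighbors; at time $t$ neighbor $i$ selects an arm according to a probability distribution $q^i(t)=(q^i_1(t),\dots,q^i_K(t))$ satisfying $q^i_j(t)\ge\varepsilon_i/K$ for all arms $j$, with $\varepsilon_i\in(0,1]$. The agent selects arms according to the probability distribution $p(t)$ of the fixed-parameter $\mathrm{EXPN}$ algorithm: with $\eta\in[0,1]$, $\delta>0$, positive weights $w_j(t)$ (with $w_j(1)=1$, $w_j(t+1)=w_j(t)e^{\delta\hat g_j(t)}$ for nonnegative reward estimates $\hat g_j(t)$), $W_t=\sum_j w_j(t)$, and $p_j(t)=(1-\eta)\frac{w_j(t)}{W_t}+\frac{\eta}{K}$. Here $p'_j(t)=1-(1-p_j(t))\prod_{i=1}^b(1-q^i_j(t))$. *)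

theory Defs
  imports Complex_Main
begin

text \<open>Arms are indexed by 1..K, neighbours by 1..b, time steps by t >= 1.
  ghat j t is the (nonnegative) reward estimate of arm j at time t.\<close>

text \<open>EXPN weights: w_j(1) = 1, w_j(t+1) = w_j(t) * exp(delta * ghat_j(t)).\<close>
definition expn_w :: "(nat \<Rightarrow> nat \<Rightarrow> real) \<Rightarrow> real \<Rightarrow> nat \<Rightarrow> nat \<Rightarrow> real" where
  "expn_w ghat \<delta> j t = (\<Prod>s\<in>{1..<t}. exp (\<delta> * ghat j s))"

definition expn_W :: "nat \<Rightarrow> (nat \<Rightarrow> nat \<Rightarrow> real) \<Rightarrow> real \<Rightarrow> nat \<Rightarrow> real" where
  "expn_W K ghat \<delta> t = (\<Sum>j\<in>{1..K}. expn_w ghat \<delta> j t)"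

definition expn_p :: "nat \<Rightarrow> real \<Rightarrow> real \<Rightarrow> (nat \<Rightarrow> nat \<Rightarrow> real) \<Rightarrow> nat \<Rightarrow> nat \<Rightarrow> real" where
  "expn_p K \<eta> \<delta> ghat j t =
     (1 - \<eta>) * expn_w ghat \<delta> j t / expn_W K ghat \<delta> t + \<eta> / real K"

definition expn_p' :: "nat \<Rightarrow> nat \<Rightarrow> real \<Rightarrow> real \<Rightarrow> (nat \<Rightarrow> nat \<Rightarrow> real)
     \<Rightarrow> (nat \<Rightarrow> nat \<Rightarrow> nat \<Rightarrow> real) \<Rightarrow> nat \<Rightarrow> nat \<Rightarrow> real" where
  "expn_p' K b \<eta> \<delta> ghat q j t =
     1 - (1 - expn_p K \<eta> \<delta> ghat j t) * (\<Prod>i\<in>{1..b}. (1 - q i j t))"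

end

theory Submission
  imports Defs
begin

lemma tangent_ineq:
  fixes a th p c Kr :: real
  assumes "0 \<le> a" "0 \<le> th" "0 \<le> p" "c = a + th / Kr" "c > 0" "Kr > 0" "a + th * p > 0"
  shows "p / (a + th * p) \<le> 1 / (Kr * c) + a / c^2 * (p - 1 / Kr)"
proof -
  define y where "y = 1 / Kr"
  have cy: "c = a + th * y" using assms(4) y_def by simp
  have poly: "(a + th * p) * (y * c + a * (p - y)) - p * c^2 = th * a * (p - y)^2"
    unfolding cy by (simp add: algebra_simps power2_eq_square)
  have cc: "c^2 > 0" using assms(5) by simp
  have r: "1 / (Kr * c) + a / c^2 * (p - 1 / Kr) = (y * c + a * (p - y)) / c^2"
  proof -
    have "1 / (Kr * c) = y * c / c^2" using assms(5,6) unfolding y_def by (simp add: power2_eq_square)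
    thus ?thesis by (simp add: add_divide_distrib y_def)
  qed
  have "th * a * (p - y)^2 \<ge> 0" using assms by simp
  hence "p * c^2 \<le> (a + th * p) * (y * c + a * (p - y))" using poly by linarith
  hence "p \<le> (a + th * p) * (y * c + a * (p - y)) / c^2" using cc by (simp add: le_divide_eq)
  hence "p \<le> (a + th * p) * ((y * c + a * (p - y)) / c^2)" by simp
  hence "p / (a + th * p) \<le> (y * c + a * (p - y)) / c^2" using assms(7) by (simp add: divide_le_eq mult.commute)
  then show ?thesis using r by simp
qed

theorem mainTheorem4:
  fixes K b :: nat and \<eta> \<delta> :: real
    and \<epsilon> :: "nat \<Rightarrow> real"
    and q :: "nat \<Rightarrow> nat \<Rightarrow> nat \<Rightarrow> real"
    and ghat :: "nat \<Rightarrow> nat \<Rightarrow> real"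
    and t :: nat
  assumes K_pos: "K \<ge> 1"
    and eta: "0 \<le> \<eta>" "\<eta> \<le> 1"
    and delta: "\<delta> > 0"
    and ghat_nonneg: "\<And>j s. 0 \<le> ghat j s"
    and eps: "\<And>i. i \<in> {1..b} \<Longrightarrow> 0 < \<epsilon> i \<and> \<epsilon> i \<le> 1"
    and q_distr: "\<And>i s. i \<in> {1..b} \<Longrightarrow> s \<ge> 1 \<Longrightarrow> (\<Sum>j\<in>{1..K}. q i j s) = 1"
    and q_lower: "\<And>i j s. i \<in> {1..b} \<Longrightarrow> j \<in> {1..K} \<Longrightarrow> s \<ge> 1 \<Longrightarrow> q i j s \<ge> \<epsilon> i / real K"
    and t_pos: "t \<ge> 1"
  shows "(\<Sum>j\<in>{1..K}. expn_p K \<eta> \<delta> ghat j t / expn_p' K b \<eta> \<delta> ghat q j t)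
           \<le> 1 / (1 - (1 - 1 / real K) * (\<Prod>i\<in>{1..b}. (1 - \<epsilon> i / real K))) + 1"
proof -
  define P where "P j = expn_p K \<eta> \<delta> ghat j t" for j
  define Q where "Q j = (\<Prod>i\<in>{1..b}. (1 - q i j t))" for j
  define Th where "Th = (\<Prod>i\<in>{1..b}. (1 - \<epsilon> i / real K))"
  define W where "W = expn_W K ghat \<delta> t"
  define w where "w j = expn_w ghat \<delta> j t" for j
  have Kr: "real K > 0" using K_pos by simp
  have wpos: "w j > 0" for j unfolding w_def expn_w_def by (simp add: prod_pos)
  have Wdef: "W = (\<Sum>j\<in>{1..K}. w j)" unfolding W_def w_def expn_W_def by simp
  have Wpos: "W > 0" unfolding Wdef using K_pos wpos by (intro sum_pos) auto
  have wle: "w j \<le> W" if "j \<in> {1..K}" for j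
    unfolding Wdef using wpos that by (intro member_le_sum) (auto intro: less_imp_le)
  have Pdef: "P j = (1 - \<eta>) * w j / W + \<eta> / real K" for j
    unfolding P_def expn_p_def w_def W_def by simp
  have P0: "P j \<ge> 0" for j unfolding Pdef using eta Wpos wpos Kr
    by (intro add_nonneg_nonneg divide_nonneg_pos mult_nonneg_nonneg) (auto intro: less_imp_le)
  have P1: "P j \<le> 1" if "j \<in> {1..K}" for j
  proof -
    have "w j / W \<le> 1" using wle[OF that] Wpos by simp
    hence "(1 - \<eta>) * w j / W \<le> 1 - \<eta>" using eta
      by (metis mult.right_neutral mult_left_mono times_divide_eq_right diff_ge_0_iff_ge)
    moreover have "\<eta> / real K \<le> \<eta>" using eta K_pos by (simp add: divide_le_eq mult_le_cancel_left1)
    ultimately show ?thesis unfolding Pdef by linarith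
  qed
  have Psum: "(\<Sum>j\<in>{1..K}. P j) = 1"
  proof -
    have "(\<Sum>j\<in>{1..K}. P j) = (1 - \<eta>) / W * (\<Sum>j\<in>{1..K}. w j) + real K * (\<eta> / real K)"
      unfolding Pdef by (simp add: sum.distrib sum_distrib_left)
    also have "\<dots> = 1" using Wpos Kr unfolding Wdef[symmetric] by simp
    finally show ?thesis .
  qed
  have qle1: "q i j t \<le> 1" if "i \<in> {1..b}" "j \<in> {1..K}" for i j
  proof -
    have "\<forall>j'\<in>{1..K}. 0 \<le> q i j' t"
      using q_lower[OF that(1) _ t_pos] eps[OF that(1)] Kr
      by (meson divide_nonneg_pos less_imp_le order_trans)
    hence "q i j t \<le> (\<Sum>j\<in>{1..K}. q i j t)" using that by (intro member_le_sum) auto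
    thus ?thesis using q_distr[OF that(1) t_pos] by simp
  qed
  have Q0: "Q j \<ge> 0" if "j \<in> {1..K}" for j
    unfolding Q_def using qle1 that by (intro prod_nonneg) auto
  have QTh: "Q j \<le> Th" if "j \<in> {1..K}" for j
    unfolding Q_def Th_def using qle1 q_lower t_pos that
    by (intro prod_mono) force
  have epsK: "0 \<le> \<epsilon> i / real K \<and> \<epsilon> i / real K \<le> 1" if "i \<in> {1..b}" for i
  proof -
    have "\<epsilon> i \<le> real K" using eps[OF that] K_pos by linarith
    thus ?thesis using eps[OF that] Kr by simp
  qed
  have Th0: "Th \<ge> 0" unfolding Th_def using epsK by (intro prod_nonneg) auto
  have Th1: "Th \<le> 1" unfolding Th_def using epsK by (intro prod_le_1) auto
  define a where "a = 1 - Th"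
  define c where "c = a + Th / real K"
  have a0: "a \<ge> 0" using Th1 a_def by simp
  have cpos: "c > 0"
  proof (cases "Th = 0")
    case True then show ?thesis using a_def c_def by simp
  next
    case False
    then have "Th / real K > 0" using Th0 Kr by simp
    then show ?thesis using a0 c_def by simp
  qed
  have Ppos: "P j > 0" for j
  proof (cases "\<eta> = 0")
    case True then show ?thesis unfolding Pdef using wpos Wpos by simp
  next
    case False
    then have "\<eta> / real K > 0" using eta Kr by simp
    moreover have "(1 - \<eta>) * w j / W \<ge> 0" using eta wpos[of j] Wpos
      by (intro divide_nonneg_pos mult_nonneg_nonneg) auto
    ultimately show ?thesis unfolding Pdef by simp
  qed
  have denpos: "a + Th * P j > 0" if "j \<in> {1..K}" for j
  proof -
    have "Th * (1 - P j) \<le> 1 * (1 - P j)" using Th1 P1[OF that] by (intro mult_right_mono) auto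
    thus ?thesis using Ppos[of j] a_def by (simp add: algebra_simps)
  qed
  have Pbound: "P j / expn_p' K b \<eta> \<delta> ghat q j t \<le> 1 / (real K * c) + a / c^2 * (P j - 1 / real K)"
    if j: "j \<in> {1..K}" for j
  proof -
    have p'eq: "expn_p' K b \<eta> \<delta> ghat q j t = 1 - (1 - P j) * Q j"
      unfolding expn_p'_def P_def Q_def by simp
    have "(1 - P j) * Q j \<le> (1 - P j) * Th" using P1[OF j] QTh[OF j] by (simp add: mult_left_mono)
    hence ge: "expn_p' K b \<eta> \<delta> ghat q j t \<ge> a + Th * P j" unfolding p'eq a_def
      by (simp add: algebra_simps)
    have "P j / expn_p' K b \<eta> \<delta> ghat q j t \<le> P j / (a + Th * P j)"
      using ge denpos[OF j] P0 by (intro divide_left_mono) auto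
    also have "\<dots> \<le> 1 / (real K * c) + a / c^2 * (P j - 1 / real K)"
      by (rule tangent_ineq[OF a0 Th0 P0 c_def cpos Kr denpos[OF j]])
    finally show ?thesis .
  qed
  have "(\<Sum>j\<in>{1..K}. P j / expn_p' K b \<eta> \<delta> ghat q j t)
        \<le> (\<Sum>j\<in>{1..K}. 1 / (real K * c) + a / c^2 * (P j - 1 / real K))"
    by (intro sum_mono Pbound)
  also have "\<dots> = 1 / c"
  proof -
    have "(\<Sum>j\<in>{1..K}. 1 / (real K * c) + a / c^2 * (P j - 1 / real K))
          = real K * (1 / (real K * c)) + a / c^2 * ((\<Sum>j\<in>{1..K}. P j) - real K * (1 / real K))"
      by (simp only: sum.distrib sum_distrib_left[symmetric] sum_subtractf sum_constant card_atLeastAtMost) simp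
    also have "\<dots> = 1 / c" using Psum Kr cpos by simp
    finally show ?thesis .
  qed
  also have "1 / c = 1 / (1 - (1 - 1 / real K) * Th)" unfolding c_def a_def
    by (simp add: algebra_simps)
  finally show ?thesis unfolding P_def Th_def by simp
qed

end
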